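(* Let a product two-action game with $m$ players be given and let $\pi\in S_m$ have exactly one fixed point. Then $EC(\pi)$ has exactly two elements, and exactly one of them is a Nash equilibrium.
   Context: Fix an integer $m\ge 1$ and $\mathcal A=\{1,\dots,m\}$. A two-action game is a finite game in normal form with player set $\mathcal A$ in which each player $i$ has exactly two pure strategies $s^i_0,s^i_1$, together with utility functions $U^i:S\to\mathbb R$, where $S=\prod_{i\in\mathcal A}\{s^i_0,s^i_1\}$. A mixed strategy combination is identified with $\underline\gamma=(\gamma^1,\dots,\gamma^m)\in[0,1]^m$, where $\gamma^i$ is the probability with which player $i$ plays $s^i_1$. The expected utility $V^i$ is the multilinear extension $V^i(\underline\gamma)=\sum_{(j_1,\dots,j_m)\in\{0,1\}^m}\prod_{k=1}^m p_k(j_k)\,U^i(s^1_{j_1},\dots,s^m_{j_m})$ with $p_k(1)=\gamma^k$, $p_k(0)=1-\gamma^k$. Write $\underline\gamma^{-i}=(\gamma^j)_{j\ne i}$ and $\lambda^i(\underline\gamma^{-i}):=V^i(\underline\gamma)|_{\gamma^i=1}-V^i(\underline\gamma)|_{\gamma^i=0}$. A Nash equilibrium is a point $\underline\gamma\in[0,1]^m$ such that for every $i$: $\lambda^i(\underline\gamma^{-i})=0$ if $0<\gamma^i<1$; $\lambda^i(\underline\gamma^{-i})\le 0$ if $\gamma^i=0$; $\lambda^i(\underline\gamma^{-i})\ge 0$ if $\gamma^i=1$. For $\underline\gamma$ put $L(\underline\gamma)=\{i:\gamma^i\in\{0,1\}\}$. A two-action game is a product two-action game if there exist $\underline v=(v_1,\dots,v_m)\in\{0,1\}^m$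 and numbers $a^i_j\in(0,1)$ for $i,j\in\mathcal A$, $i\ne j$, with $a^{i_1}_j\neq a^{i_2}_j$ whenever $i_1\neq i_2$ and both differ from $j$, such that $\lambda^i(\underline\gamma^{-i})=(-1)^{v_i}\prod_{j\in\mathcal A\setminus\{i\}}(\gamma^j-a^i_j)$ for every $i\in\mathcal A$. For $\pi\in S_m$, $F(\pi)=\{i\in\mathcal A:\pi(i)=i\}$ and $EC(\pi):=\{\underline\gamma\in[0,1]^m \mid L(\underline\gamma)=F(\pi),\ \gamma^j=a^{\pi(j)}_j \text{ for all } j\notin F(\pi)\}$. *)

theory Defs
  imports Complex_Main "HOL-Library.FuncSet" "HOL-Combinatorics.Permutations"
begin

text \<open>A pure strategy profile is an extensional function
  s : {1..m} -> bool (s i = True means player i plays s^i_1).\<close>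

definition players :: "nat \<Rightarrow> nat set" where
  "players m = {1..m}"

definition pure_profiles :: "nat \<Rightarrow> (nat \<Rightarrow> bool) set" where
  "pure_profiles m = players m \<rightarrow>\<^sub>E (UNIV :: bool set)"

definition mixed_profiles :: "nat \<Rightarrow> (nat \<Rightarrow> real) set" where
  "mixed_profiles m = players m \<rightarrow>\<^sub>E {0..1}"

definition exp_util :: "nat \<Rightarrow> (nat \<Rightarrow> (nat \<Rightarrow> bool) \<Rightarrow> real) \<Rightarrow> nat \<Rightarrow> (nat \<Rightarrow> real) \<Rightarrow> real" where
  "exp_util m U i \<gamma> =
     (\<Sum>s\<in>pure_profiles m. (\<Prod>k\<in>players m. (if s k then \<gamma> k else 1 - \<gamma> k)) * U i s)"

definition lam :: "nat \<Rightarrow> (nat \<Rightarrow> (nat \<Rightarrow> bool) \<Rightarrow> real) \<Rightarrow> nat \<Rightarrow> (nat \<Rightarrow> real) \<Rightarrow> real" where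
  "lam m U i \<gamma> = exp_util m U i (\<gamma>(i := 1)) - exp_util m U i (\<gamma>(i := 0))"

definition nash_eq :: "nat \<Rightarrow> (nat \<Rightarrow> (nat \<Rightarrow> bool) \<Rightarrow> real) \<Rightarrow> (nat \<Rightarrow> real) \<Rightarrow> bool" where
  "nash_eq m U \<gamma> \<longleftrightarrow> \<gamma> \<in> mixed_profiles m \<and>
     (\<forall>i\<in>players m.
        (0 < \<gamma> i \<and> \<gamma> i < 1 \<longrightarrow> lam m U i \<gamma> = 0) \<and>
        (\<gamma> i = 0 \<longrightarrow> lam m U i \<gamma> \<le> 0) \<and>
        (\<gamma> i = 1 \<longrightarrow> lam m U i \<gamma> \<ge> 0))"

definition Lset :: "nat \<Rightarrow> (nat \<Rightarrow> real) \<Rightarrow> nat set" where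
  "Lset m \<gamma> = {i\<in>players m. \<gamma> i = 0 \<or> \<gamma> i = 1}"

definition product_game ::
  "nat \<Rightarrow> (nat \<Rightarrow> (nat \<Rightarrow> bool) \<Rightarrow> real) \<Rightarrow> (nat \<Rightarrow> nat) \<Rightarrow> (nat \<Rightarrow> nat \<Rightarrow> real) \<Rightarrow> bool" where
  "product_game m U v a \<longleftrightarrow>
     (\<forall>i\<in>players m. v i \<in> {0,1}) \<and>
     (\<forall>i\<in>players m. \<forall>j\<in>players m. i \<noteq> j \<longrightarrow> 0 < a i j \<and> a i j < 1) \<and>
     (\<forall>j\<in>players m. \<forall>i1\<in>players m. \<forall>i2\<in>players m.
        i1 \<noteq> i2 \<and> i1 \<noteq> j \<and> i2 \<noteq> j \<longrightarrow> a i1 j \<noteq> a i2 j) \<and>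
     (\<forall>i\<in>players m. \<forall>\<gamma>\<in>mixed_profiles m.
        lam m U i \<gamma> = (-1) ^ (v i) * (\<Prod>j\<in>players m - {i}. (\<gamma> j - a i j)))"

definition fixpts :: "nat \<Rightarrow> (nat \<Rightarrow> nat) \<Rightarrow> nat set" where
  "fixpts m \<pi> = {i\<in>players m. \<pi> i = i}"

definition EC :: "nat \<Rightarrow> (nat \<Rightarrow> nat \<Rightarrow> real) \<Rightarrow> (nat \<Rightarrow> nat) \<Rightarrow> (nat \<Rightarrow> real) set" where
  "EC m a \<pi> = {\<gamma>\<in>mixed_profiles m. Lset m \<gamma> = fixpts m \<pi> \<and>
                 (\<forall>j\<in>players m - fixpts m \<pi>. \<gamma> j = a (\<pi> j) j)}"

end

theory Submission
  imports Defs
begin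

theorem theorem3p7:
  fixes m :: nat and U :: "nat \<Rightarrow> (nat \<Rightarrow> bool) \<Rightarrow> real"
    and v :: "nat \<Rightarrow> nat" and a :: "nat \<Rightarrow> nat \<Rightarrow> real" and \<pi> :: "nat \<Rightarrow> nat"
  assumes "m \<ge> 1"
    and "product_game m U v a"
    and "\<pi> permutes players m"
    and "card (fixpts m \<pi>) = 1"
  shows "card (EC m a \<pi>) = 2 \<and> card {\<gamma>\<in>EC m a \<pi>. nash_eq m U \<gamma>} = 1"
proof -
  note pg = assms(2)[unfolded product_game_def]
  have ap: "\<And>i j. i \<in> players m \<Longrightarrow> j \<in> players m \<Longrightarrow> i \<noteq> j \<Longrightarrow> 0 < a i j \<and> a i j < 1"
    using pg by blast
  have adist: "\<And>i1 i2 j. j \<in> players m \<Longrightarrow> i1 \<in> players m \<Longrightarrow> i2 \<in> players m \<Longrightarrow>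
      i1 \<noteq> i2 \<Longrightarrow> i1 \<noteq> j \<Longrightarrow> i2 \<noteq> j \<Longrightarrow> a i1 j \<noteq> a i2 j"
    using pg by blast
  have lamf: "\<And>i \<gamma>. i \<in> players m \<Longrightarrow> \<gamma> \<in> mixed_profiles m \<Longrightarrow>
      lam m U i \<gamma> = (-1) ^ (v i) * (\<Prod>j\<in>players m - {i}. (\<gamma> j - a i j))"
    using pg by blast
  obtain k where fk: "fixpts m \<pi> = {k}" using assms(4) card_1_singletonE by blast
  have kP: "k \<in> players m" and pk: "\<pi> k = k" using fk unfolding fixpts_def by auto
  have nf: "\<And>j. j \<in> players m \<Longrightarrow> j \<noteq> k \<Longrightarrow> \<pi> j \<noteq> j"
    using fk unfolding fixpts_def by auto
  have pP: "\<And>j. j \<in> players m \<Longrightarrow> \<pi> j \<in> players m"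
    using assms(3) by (simp add: permutes_in_image)
  have pinj: "\<And>x y. \<pi> x = \<pi> y \<Longrightarrow> x = y"
    using assms(3) by (meson permutes_inj injD)
  define g :: "real \<Rightarrow> nat \<Rightarrow> real" where
    "g t = (\<lambda>j. if j \<in> players m then (if j = k then t else a (\<pi> j) j) else undefined)" for t
  have gin: "\<And>j. j \<in> players m \<Longrightarrow> j \<noteq> k \<Longrightarrow> 0 < g t j \<and> g t j < 1" for t
    unfolding g_def using ap pP nf by auto
  have gmix: "t \<in> {0,1} \<Longrightarrow> g t \<in> mixed_profiles m" for t
    unfolding mixed_profiles_def PiE_def extensional_def
    using gin kP by (auto simp: g_def less_imp_le)
  have ECeq: "EC m a \<pi> = {g 0, g 1}"
  proof
    show "EC m a \<pi> \<subseteq> {g 0, g 1}"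
    proof
      fix \<gamma> assume "\<gamma> \<in> EC m a \<pi>"
      hence gm: "\<gamma> \<in> mixed_profiles m" and L: "Lset m \<gamma> = {k}"
        and o: "\<forall>j\<in>players m - {k}. \<gamma> j = a (\<pi> j) j"
        unfolding EC_def fk by auto
      have extg: "\<And>j. j \<notin> players m \<Longrightarrow> \<gamma> j = undefined"
        using gm unfolding mixed_profiles_def PiE_def extensional_def by auto
      have "\<gamma> k = 0 \<or> \<gamma> k = 1" using L unfolding Lset_def by auto
      moreover have "\<gamma> = g (\<gamma> k)"
        by (rule ext) (auto simp: g_def extg o)
      ultimately show "\<gamma> \<in> {g 0, g 1}" by auto
    qed
  next
    have "g t \<in> EC m a \<pi>" if t: "t \<in> {0,1}" for t
    proof -
      have "Lset m (g t) = {k}"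
        unfolding Lset_def using gin kP t by (auto simp: g_def) (metis less_irrefl)+
      thus ?thesis unfolding EC_def fk using gmix[OF t] by (auto simp: g_def)
    qed
    thus "{g 0, g 1} \<subseteq> EC m a \<pi>" by auto
  qed
  have gne: "g 0 \<noteq> g 1"
  proof
    assume "g 0 = g 1" hence "g 0 k = g 1 k" by simp
    thus False using kP by (simp add: g_def)
  qed
  define P where "P = (\<Prod>l\<in>players m - {k}. (a (\<pi> l) l - a k l))"
  define c where "c = (-1::real) ^ (v k) * P"
  have Pnz: "P \<noteq> 0"
    unfolding P_def
  proof (subst prod_zero_iff)
    show "finite (players m - {k})" by (simp add: players_def)
    show "\<not> (\<exists>l\<in>players m - {k}. a (\<pi> l) l - a k l = 0)"
    proof
      assume "\<exists>l\<in>players m - {k}. a (\<pi> l) l - a k l = 0"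
      then obtain l where l: "l \<in> players m" "l \<noteq> k" "a (\<pi> l) l = a k l" by auto
      have "\<pi> l \<noteq> k" using l pk pinj by metis
      thus False using adist[OF l(1) pP[OF l(1)] kP] l nf by auto
    qed
  qed
  have cnz: "c \<noteq> 0" unfolding c_def using Pnz by simp
  have lamk: "t \<in> {0,1} \<Longrightarrow> lam m U k (g t) = c" for t
    unfolding c_def P_def lamf[OF kP gmix] by (intro arg_cong2[where f="(*)"] refl prod.cong) (auto simp: g_def)
  have lamo: "t \<in> {0,1} \<Longrightarrow> i \<in> players m \<Longrightarrow> i \<noteq> k \<Longrightarrow> lam m U i (g t) = 0" for t i
  proof -
    assume t: "t \<in> {0,1}" and i: "i \<in> players m" "i \<noteq> k"
    define l where "l = inv \<pi> i"
    have pl: "\<pi> l = i" unfolding l_def using assms(3) permutes_inverses(1) by metis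
    have lP: "l \<in> players m" unfolding l_def using assms(3) i
      by (simp add: permutes_in_image permutes_inv)
    have lk: "l \<noteq> k" using pl pk i by auto
    have li: "l \<noteq> i" using pl nf[OF lP lk] by auto
    have "(\<Prod>j\<in>players m - {i}. (g t j - a i j)) = 0"
      using lP lk li pl by (intro prod_zero) (auto simp: players_def g_def intro!: bexI[of _ l])
    thus ?thesis using lamf[OF i(1) gmix[OF t]] by simp
  qed
  have nash: "t \<in> {0,1} \<Longrightarrow> nash_eq m U (g t) \<longleftrightarrow> (t = 0 \<longrightarrow> c \<le> 0) \<and> (t = 1 \<longrightarrow> c \<ge> 0)" for t
  proof -
    assume t: "t \<in> {0,1}"
    have "nash_eq m U (g t) \<longleftrightarrow> ((t = 0 \<longrightarrow> lam m U k (g t) \<le> 0) \<and> (t = 1 \<longrightarrow> lam m U k (g t) \<ge> 0))"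
      unfolding nash_eq_def using gmix[OF t] gin lamo[OF t] kP t
      by (auto simp: g_def)
    thus ?thesis using lamk[of 0] lamk[of 1] by simp
  qed
  have "{\<gamma>\<in>EC m a \<pi>. nash_eq m U \<gamma>} = (if c < 0 then {g 0} else {g 1})"
    using nash[of 0] nash[of 1] cnz gne unfolding ECeq by auto
  thus ?thesis using gne ECeq by simp
qed

end
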